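(* Under the standing assumptions in the context, for every $k$ the EFOFL gradient estimate satisfies $\mathbb E[g'_k\mid\mathcal H_k]=b_1\nabla F(\theta_k)$.
   Context: Federated setting: $d,N\ge1$, $\mathcal N=\{1,\dots,N\}$; device $i$ has data distribution $D_i$, loss $f_i(\theta,\xi)$ differentiable in $\theta$ with $\mathbb E_{\xi\sim D_i}[\nabla_\theta f_i(\theta,\xi)]=\nabla F_i(\theta)$, where $F_i(\theta)=\mathbb E_{\xi\sim D_i}[f_i(\theta,\xi)]$; $F=\sum_iF_i$. Standing assumptions: (i) $\nabla F_i,\nabla^2F_i$ continuous, $\|\nabla^2F_i\|_2\le b$; (ii) $\theta\mapsto f_i(\theta,\xi)$ Lipschitz with constant $L_\xi$, $\mathbb E_\xi f_i<\infty$; (iv) perturbations $\Phi_k=(\phi_k^1,\dots,\phi_k^d)^T$ independent across iterations, $\mathbb E(\phi_k^j\phi_k^l)=0$ ($j\neq l$), $\mathbb E(\phi_k^j)^2=b_1>0$, $\|\Phi_k\|\le b_2$; step sizes $\eta_k>0$. Wireless model: $h_{i,k}$ real, $\mathbb E h_{i,k}=0$, $\mathbb E(h_{i,k}^2)>0$ independent of $k$, independent across $i,k$; noises $n_{1,k},n_{2,k}$ real zero mean, variances $\sigma_1^2,\sigma_2^2$; samples $\xi_{i,k}\sim D_i$; all mutually independent and independent of the past; $a_i=1/\mathbb E(h_{i,k}^2)$. EFOFL: $g'_k=\Phi_k(\sum_ia_ih_{i,k}+n_{1,k})(\sum_i(\nabla_\theta f_i(\theta_k,\xi_{i,k}))^T\Phi_kh_{i,k}+n_{2,k})$,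 $\theta_{k+1}=\theta_k-\eta_kg'_k$. History $\mathcal H_k=\{\theta_0,\xi_0,\dots,\theta_{k-1},\xi_{k-1},\theta_k\}$. *)

theory Defs
  imports "HOL-Probability.Probability"
begin

definition gprime ::
  "('n::finite \<Rightarrow> real) \<Rightarrow> real^'d \<Rightarrow> ('n \<Rightarrow> real) \<Rightarrow> real \<Rightarrow> ('n \<Rightarrow> real^'d) \<Rightarrow> real \<Rightarrow> real^'d"
  where
  "gprime a Phi h n1 G n2 =
     (((\<Sum>i\<in>UNIV. a i * h i) + n1) * ((\<Sum>i\<in>UNIV. (G i \<bullet> Phi) * h i) + n2)) *\<^sub>R Phi"

definition hist ::
  "'a measure \<Rightarrow> (nat \<Rightarrow> 'a \<Rightarrow> real^'d) \<Rightarrow> 'x measure \<Rightarrow> (nat \<Rightarrow> 'n \<Rightarrow> 'a \<Rightarrow> 'x) \<Rightarrow> nat \<Rightarrow> 'a measure"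
  where
  "hist M theta S xi k = sigma (space M)
     ((\<Union>j\<in>{..k}. sets (vimage_algebra (space M) (theta j) borel)) \<union>
      (\<Union>j\<in>{..<k}. \<Union>i. sets (vimage_algebra (space M) (xi j i) S)))"

text \<open>Index type for the family of primitive random variables (used to state mutual independence).\<close>
datatype 'n rvar = Theta0 | PhiV nat | HV nat 'n | N1V nat | N2V nat | XiV nat 'n

end

theory Submission
  imports Defs
begin

lemma vec_meas:
  fixes f :: "'a \<Rightarrow> real^'d"
  assumes "\<And>i. (\<lambda>x. f x $ i) \<in> borel_measurable M"
  shows "f \<in> borel_measurable M"
  unfolding borel_measurable_euclidean_space[where f=f]
  using assms by (auto simp: Basis_vec_def inner_axis)

lemma vec_nth_meas[measurable (raw)]:
  fixes f :: "'a \<Rightarrow> real^'d"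
  shows "f \<in> borel_measurable M \<Longrightarrow> (\<lambda>x. f x $ i) \<in> borel_measurable M"
  using measurable_compose[OF _ borel_measurable_nth] by blast

lemma carath:
  fixes g :: "real^'d \<Rightarrow> 'x \<Rightarrow> real"
  assumes cont: "\<And>\<xi>. continuous_on UNIV (\<lambda>t. g t \<xi>)"
    and meas: "\<And>t. g t \<in> borel_measurable S"
  shows "(\<lambda>p. g (fst p) (snd p)) \<in> borel_measurable (borel \<Otimes>\<^sub>M S)"
proof -
  define z :: "nat \<Rightarrow> real^'d \<Rightarrow> ('d \<Rightarrow> int)" where "z n t = (\<lambda>m. \<lfloor>real (Suc n) * t$m\<rfloor>)" for n t
  define v :: "nat \<Rightarrow> ('d \<Rightarrow> int) \<Rightarrow> real^'d" where "v n q = (\<chi> m. real_of_int (q m) / real (Suc n))" for n q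
  have lim: "(\<lambda>n. v n (z n t)) \<longlonglongrightarrow> t" for t
  proof -
    have b: "norm (v n (z n t) - t) \<le> real CARD('d) / real (Suc n)" for n
    proof -
      have "norm (v n (z n t) - t) \<le> (\<Sum>m\<in>UNIV. \<bar>(v n (z n t) - t) $ m\<bar>)"
        by (rule norm_le_l1_cart)
      also have "\<dots> \<le> (\<Sum>m\<in>(UNIV::'d set). 1 / real (Suc n))"
      proof (rule sum_mono)
        fix m
        define N where "N = real (Suc n)"
        define F where "F = real_of_int \<lfloor>N * t$m\<rfloor>"
        have N: "N > 0" by (simp add: N_def)
        have "F \<le> N * t$m" "N * t$m < F + 1" unfolding F_def by linarith+
        then have "\<bar>F - N * t$m\<bar> \<le> 1" by linarith
        moreover have "(v n (z n t) - t) $ m = (F - N * t$m) / N"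
          using N by (simp add: v_def z_def F_def N_def field_simps)
        ultimately have "\<bar>(v n (z n t) - t) $ m\<bar> \<le> 1 / N"
          using N by (simp add: abs_divide divide_right_mono)
        then show "\<bar>(v n (z n t) - t) $ m\<bar> \<le> 1 / real (Suc n)" by (simp add: N_def)
      qed
      finally show ?thesis by simp
    qed
    have "(\<lambda>n. real CARD('d) / real (Suc n)) \<longlonglongrightarrow> 0"
      using LIMSEQ_Suc[OF lim_const_over_n[of "real CARD('d)"]] by simp
    then have "(\<lambda>n. v n (z n t) - t) \<longlonglongrightarrow> 0"
      by (rule Lim_null_comparison[rotated]) (use b in auto)
    then show ?thesis using Lim_null by (simp add: LIM_zero_iff)
  qed
  show ?thesis
  proof (rule borel_measurable_LIMSEQ_real)
    fix n
    show "(\<lambda>p. g (v n (z n (fst p))) (snd p)) \<in> borel_measurable (borel \<Otimes>\<^sub>M S)"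
    proof (rule measurable_compose_countable[where f="\<lambda>q p. g (v n q) (snd p)" and g="\<lambda>p. z n (fst p)"])
      fix q show "(\<lambda>p. g (v n q) (snd p)) \<in> borel_measurable (borel \<Otimes>\<^sub>M S)"
        using meas by measurable
    next
      show "(\<lambda>p. z n (fst p)) \<in> measurable (borel \<Otimes>\<^sub>M S) (count_space UNIV)"
        unfolding measurable_count_space_eq2_countable
      proof safe
        fix a
        have "(\<lambda>p. z n (fst p)) -` {a} \<inter> space (borel \<Otimes>\<^sub>M S) = {p \<in> space (borel \<Otimes>\<^sub>M S). \<forall>m. \<lfloor>real (Suc n) * fst p $m\<rfloor> = a m}"
          by (auto simp: z_def)
        also have "\<dots> \<in> sets (borel \<Otimes>\<^sub>M S)" by measurable
        finally show "(\<lambda>p. z n (fst p)) -` {a} \<inter> space (borel \<Otimes>\<^sub>M S) \<in> sets (borel \<Otimes>\<^sub>M S)" .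
      qed auto
    qed
  next
    fix p
    have "isCont (\<lambda>t. g t (snd p)) (fst p)"
      using cont[of "snd p"] by (simp add: continuous_on_eq_continuous_at)
    then show "(\<lambda>n. g (v n (z n (fst p))) (snd p)) \<longlonglongrightarrow> g (fst p) (snd p)"
      using lim[of "fst p"] by (rule isCont_tendsto_compose)
  qed
qed


lemma gf_meas:
  fixes f :: "real^'d \<Rightarrow> 'x \<Rightarrow> real" and gf :: "real^'d \<Rightarrow> 'x \<Rightarrow> real^'d"
  assumes fg: "\<And>\<theta> \<xi>. ((\<lambda>t. f t \<xi>) has_derivative (\<lambda>v. gf \<theta> \<xi> \<bullet> v)) (at \<theta>)"
    and fm: "\<And>t. f t \<in> borel_measurable S"
  shows "(\<lambda>p. gf (fst p) (snd p)) \<in> borel_measurable (borel \<Otimes>\<^sub>M S)"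
proof -
  have cont: "continuous_on UNIV (\<lambda>t. f t \<xi>)" for \<xi>
    by (rule continuous_at_imp_continuous_on) (use has_derivative_continuous[OF fg] in auto)
  have fj[measurable]: "(\<lambda>p. f (fst p) (snd p)) \<in> borel_measurable (borel \<Otimes>\<^sub>M S)"
    by (rule carath[OF cont fm])
  show ?thesis
  proof (rule vec_meas)
    fix m
    define e :: "real^'d" where "e = axis m 1"
    have lim: "(\<lambda>n. (f (\<theta> + (1 / real (Suc n)) *\<^sub>R e) \<xi> - f \<theta> \<xi>) / (1 / real (Suc n))) \<longlonglongrightarrow> gf \<theta> \<xi> $ m" for \<theta> \<xi>
    proof -
      have "((\<lambda>s. \<theta> + s *\<^sub>R e) has_derivative (\<lambda>s. s *\<^sub>R e)) (at 0)"
        by (auto intro!: derivative_eq_intros)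
      from diff_chain_at[OF this, of "\<lambda>t. f t \<xi>" "\<lambda>v. gf \<theta> \<xi> \<bullet> v"] fg[of \<xi> "\<theta> + 0 *\<^sub>R e"]
      have "((\<lambda>s. f (\<theta> + s *\<^sub>R e) \<xi>) has_derivative (\<lambda>s. s * (gf \<theta> \<xi> $ m))) (at 0)"
        by (simp add: o_def e_def inner_axis)
      then have "((\<lambda>s. f (\<theta> + s *\<^sub>R e) \<xi>) has_real_derivative (gf \<theta> \<xi> $ m)) (at 0)"
        by (simp add: has_field_derivative_def mult.commute[of _ "gf \<theta> \<xi> $ m"])
      then have "((\<lambda>s. (f (\<theta> + s *\<^sub>R e) \<xi> - f \<theta> \<xi>) / s) \<longlongrightarrow> gf \<theta> \<xi> $ m) (at 0)"
        by (simp add: has_field_derivative_iff)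
      moreover have "(\<lambda>n. 1 / real (Suc n)) \<longlonglongrightarrow> 0"
        using LIMSEQ_Suc[OF lim_const_over_n[of 1]] by simp
      ultimately show ?thesis
        unfolding tendsto_at_iff_sequentially o_def
        by (elim allE[of _ "\<lambda>n. 1 / real (Suc n)"]) simp
    qed
    show "(\<lambda>p. gf (fst p) (snd p) $ m) \<in> borel_measurable (borel \<Otimes>\<^sub>M S)"
    proof (rule borel_measurable_LIMSEQ_real)
      fix p :: "(real^'d) \<times> 'x"
      show "(\<lambda>n. (f (fst p + (1 / real (Suc n)) *\<^sub>R e) (snd p) - f (fst p) (snd p)) / (1 / real (Suc n))) \<longlonglongrightarrow> gf (fst p) (snd p) $ m"
        by (rule lim)
    next
      fix n
      show "(\<lambda>p. (f (fst p + (1 / real (Suc n)) *\<^sub>R e) (snd p) - f (fst p) (snd p)) / (1 / real (Suc n))) \<in> borel_measurable (borel \<Otimes>\<^sub>M S)"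
      proof -
        have [measurable]: "(\<lambda>p. f (fst p + (1 / real (Suc n)) *\<^sub>R e) (snd p)) \<in> borel_measurable (borel \<Otimes>\<^sub>M S)"
          using measurable_compose[OF _ fj, of "\<lambda>p. (fst p + (1 / real (Suc n)) *\<^sub>R e, snd p)"] by simp
        show ?thesis by measurable
      qed
    qed
  qed
qed

definition Sg :: "'a measure \<Rightarrow> ('v \<Rightarrow> 'a set set) \<Rightarrow> 'v set \<Rightarrow> 'a measure" where
  "Sg M E J = sigma (space M) (\<Union>v\<in>J. E v)"

lemma Sg_space: "(\<And>v. E v \<subseteq> sets M) \<Longrightarrow> space (Sg M E J) = space M"
  unfolding Sg_def using sets.sets_into_space by (intro space_measure_of) blast

lemma Sg_sets: "(\<And>v. E v \<subseteq> sets M) \<Longrightarrow> sets (Sg M E J) = sigma_sets (space M) (\<Union>v\<in>J. E v)"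
  unfolding Sg_def using sets.sets_into_space by (intro sets_measure_of) blast

lemma Sg_sub: "(\<And>v. E v \<subseteq> sets M) \<Longrightarrow> sets (Sg M E J) \<subseteq> sets M"
  by (simp add: Sg_sets) (rule sets.sigma_sets_subset, auto)

lemma Sg_subalg: "(\<And>v. E v \<subseteq> sets M) \<Longrightarrow> subalgebra M (Sg M E J)"
  by (simp add: subalgebra_def Sg_space Sg_sub)

lemma Sg_meas_M: "(\<And>v. E v \<subseteq> sets M) \<Longrightarrow> f \<in> measurable (Sg M E J) N \<Longrightarrow> f \<in> measurable M N"
  using measurable_from_subalg[OF Sg_subalg] by blast

lemma Sg_mono_meas:
  assumes E: "\<And>v. E v \<subseteq> sets M" and J: "J \<subseteq> J'" and f: "f \<in> measurable (Sg M E J) N"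
  shows "f \<in> measurable (Sg M E J') N"
proof -
  have "sets (Sg M E J) \<subseteq> sets (Sg M E J')"
    using J by (simp add: Sg_sets[OF E]) (rule sigma_sets_mono', blast)
  then show ?thesis using f
    unfolding measurable_def by (auto simp: Sg_space[OF E])
qed

lemma Sg_gen_meas:
  assumes E: "\<And>v. E v \<subseteq> sets M" and f: "f \<in> measurable M N" and v: "v \<in> J"
    and Ev: "E v = sets (vimage_algebra (space M) f N)"
  shows "f \<in> measurable (Sg M E J) N"
proof (rule measurableI)
  fix x assume "x \<in> space (Sg M E J)" then show "f x \<in> space N"
    using f by (auto simp: Sg_space[OF E] measurable_space)
next
  fix A assume "A \<in> sets N"
  then have "f -` A \<inter> space M \<in> E v" by (simp add: Ev in_vimage_algebra)
  then show "f -` A \<inter> space (Sg M E J) \<in> sets (Sg M E J)"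
    using v by (auto simp: Sg_space[OF E] Sg_sets[OF E])
qed

lemma indep_groups:
  assumes P: "prob_space M" and ind: "prob_space.indep_sets M E UNIV"
    and IS: "\<And>v. Int_stable (E v)" and dis: "J1 \<inter> J2 = {}"
  shows "prob_space.indep_set M (sigma_sets (space M) (\<Union>v\<in>J1. E v)) (sigma_sets (space M) (\<Union>v\<in>J2. E v))"
proof -
  interpret prob_space M by fact
  have "indep_sets (\<lambda>b. sigma_sets (space M) (\<Union>i\<in>case_bool J1 J2 b. E i)) UNIV"
  proof (rule indep_sets_collect_sigma)
    show "indep_sets E (\<Union>j\<in>UNIV. case_bool J1 J2 j)"
      by (rule indep_sets_mono_index[OF _ ind]) auto
    show "disjoint_family_on (case_bool J1 J2) UNIV"
      using dis unfolding disjoint_family_on_def by (auto split: bool.split)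
  qed (rule IS)
  moreover have "(\<lambda>b. sigma_sets (space M) (\<Union>i\<in>case_bool J1 J2 b. E i)) =
     case_bool (sigma_sets (space M) (\<Union>v\<in>J1. E v)) (sigma_sets (space M) (\<Union>v\<in>J2. E v))"
    by (rule ext) (simp split: bool.split)
  ultimately show ?thesis unfolding indep_set_def by simp
qed

lemma indep_var_groups:
  assumes P: "prob_space M" and ind: "prob_space.indep_sets M E UNIV"
    and IS: "\<And>v. Int_stable (E v)" and dis: "J1 \<inter> J2 = {}"
    and E: "\<And>v. E v \<subseteq> sets M"
    and X: "X \<in> measurable (Sg M E J1) N1" and Y: "Y \<in> measurable (Sg M E J2) N2"
  shows "prob_space.indep_var M N1 X N2 Y"
proof -
  interpret prob_space M by fact
  have I: "indep_set (sigma_sets (space M) (\<Union>v\<in>J1. E v)) (sigma_sets (space M) (\<Union>v\<in>J2. E v))"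
    by (rule indep_groups[OF P ind IS dis])
  have sX: "sigma_sets (space M) {X -` A \<inter> space M | A. A \<in> sets N1} \<subseteq> sigma_sets (space M) (\<Union>v\<in>J1. E v)"
    using X by (intro sigma_sets_mono) (auto simp: measurable_def Sg_space[OF E] Sg_sets[OF E])
  have sY: "sigma_sets (space M) {Y -` A \<inter> space M | A. A \<in> sets N2} \<subseteq> sigma_sets (space M) (\<Union>v\<in>J2. E v)"
    using Y by (intro sigma_sets_mono) (auto simp: measurable_def Sg_space[OF E] Sg_sets[OF E])
  show ?thesis
    unfolding indep_var_eq
  proof (intro conjI)
    show "random_variable N1 X" by (rule Sg_meas_M[OF E X])
    show "random_variable N2 Y" by (rule Sg_meas_M[OF E Y])
    show "indep_set (sigma_sets (space M) {X -` A \<inter> space M | A. A \<in> sets N1})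
                    (sigma_sets (space M) {Y -` A \<inter> space M | A. A \<in> sets N2})"
      using I unfolding indep_set_def
      by (rule indep_sets_mono_sets) (use sX sY in \<open>auto split: bool.split\<close>)
  qed
qed

lemma indep_prod:
  fixes X Y :: "'a \<Rightarrow> real"
  assumes P: "prob_space M" and ind: "prob_space.indep_sets M E UNIV"
    and IS: "\<And>v. Int_stable (E v)" and dis: "J1 \<inter> J2 = {}"
    and E: "\<And>v. E v \<subseteq> sets M"
    and X: "X \<in> borel_measurable (Sg M E J1)" and Y: "Y \<in> borel_measurable (Sg M E J2)"
    and iX: "integrable M X" and iY: "integrable M Y"
  shows "integrable M (\<lambda>\<omega>. X \<omega> * Y \<omega>)" "(\<integral>\<omega>. X \<omega> * Y \<omega> \<partial>M) = (\<integral>\<omega>. X \<omega> \<partial>M) * (\<integral>\<omega>. Y \<omega> \<partial>M)"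
proof -
  interpret prob_space M by fact
  have "indep_var borel X borel Y" by (rule indep_var_groups[OF P ind IS dis E X Y])
  then show "integrable M (\<lambda>\<omega>. X \<omega> * Y \<omega>)" "(\<integral>\<omega>. X \<omega> * Y \<omega> \<partial>M) = (\<integral>\<omega>. X \<omega> \<partial>M) * (\<integral>\<omega>. Y \<omega> \<partial>M)"
    using indep_var_integrable indep_var_lebesgue_integral iX iY by auto
qed

lemma indep_var_sub:
  assumes P: "prob_space M" and ind: "prob_space.indep_set M (sets G) (sets K)"
    and G: "subalgebra M G" and K: "subalgebra M K"
    and X: "X \<in> measurable G N1" and Y: "Y \<in> measurable K N2"
  shows "prob_space.indep_var M N1 X N2 Y"
proof -
  interpret prob_space M by fact
  have sX: "sigma_sets (space M) {X -` A \<inter> space M | A. A \<in> sets N1} \<subseteq> sets G"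
    using X G sets.sigma_sets_subset[of "{X -` A \<inter> space M | A. A \<in> sets N1}" G]
    by (auto simp: measurable_def subalgebra_def)
  have sY: "sigma_sets (space M) {Y -` A \<inter> space M | A. A \<in> sets N2} \<subseteq> sets K"
    using Y K sets.sigma_sets_subset[of "{Y -` A \<inter> space M | A. A \<in> sets N2}" K]
    by (auto simp: measurable_def subalgebra_def)
  show ?thesis
    unfolding indep_var_eq
  proof (intro conjI)
    show "random_variable N1 X" by (rule measurable_from_subalg[OF G X])
    show "random_variable N2 Y" by (rule measurable_from_subalg[OF K Y])
    show "indep_set (sigma_sets (space M) {X -` A \<inter> space M | A. A \<in> sets N1})
                    (sigma_sets (space M) {Y -` A \<inter> space M | A. A \<in> sets N2})"
      using ind unfolding indep_set_def
      by (rule indep_sets_mono_sets) (use sX sY in \<open>auto split: bool.split\<close>)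
  qed
qed

lemma freeze_nn:
  fixes Z :: "'a \<Rightarrow> real^'d" and \<psi> :: "real^'d \<Rightarrow> 'a \<Rightarrow> ennreal"
  assumes P: "prob_space M"
    and H: "subalgebra M H" and HG: "sets H \<subseteq> sets G" and G: "subalgebra M G"
    and K: "subalgebra M K"
    and ind: "prob_space.indep_set M (sets G) (sets K)"
    and Z: "Z \<in> borel_measurable G" and ZH: "Z \<in> borel_measurable H"
    and \<psi>: "(\<lambda>p. \<psi> (fst p) (snd p)) \<in> borel_measurable (borel \<Otimes>\<^sub>M K)"
  shows "AE \<omega> in M. nn_cond_exp M H (\<lambda>\<omega>. \<psi> (Z \<omega>) \<omega>) \<omega> = (\<integral>\<^sup>+\<omega>'. \<psi> (Z \<omega>) \<omega>' \<partial>M)"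
proof -
  interpret prob_space M by fact
  have "sigma_finite_subalgebra M H"
    by (rule finite_measure_subalgebra_is_sigma_finite)
       (simp add: finite_measure_subalgebra_def finite_measure_subalgebra_axioms_def H finite_measure_axioms)
  then interpret sigma_finite_subalgebra M H .
  define DK where "DK = distr M K (\<lambda>x. x)"
  have idK[measurable]: "(\<lambda>x. x) \<in> measurable M K"
    by (rule measurable_from_subalg[OF K]) simp
  interpret DK: prob_space DK unfolding DK_def by (rule prob_space_distr[OF idK])
  have sDK: "sets DK = sets K" by (simp add: DK_def)
  have ZM[measurable]: "Z \<in> borel_measurable M" by (rule measurable_from_subalg[OF G Z])
  have \<psi>'[measurable]: "(\<lambda>p. \<psi> (fst p) (snd p)) \<in> borel_measurable (borel \<Otimes>\<^sub>M DK)"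
    using \<psi> by (simp add: measurable_cong_sets[OF sets_pair_measure_cong[OF refl sDK] refl])
  have \<psi>\<theta>[measurable]: "\<psi> \<theta> \<in> borel_measurable K" for \<theta>
    using measurable_compose[OF measurable_Pair[OF measurable_const[of \<theta>] measurable_ident_sets[OF refl]] \<psi>]
    by (simp add: space_borel)
  define \<Psi> where "\<Psi> \<theta> = (\<integral>\<^sup>+\<omega>. \<psi> \<theta> \<omega> \<partial>M)" for \<theta>
  have \<Psi>DK: "\<Psi> \<theta> = (\<integral>\<^sup>+\<omega>. \<psi> \<theta> \<omega> \<partial>DK)" for \<theta>
    unfolding \<Psi>_def DK_def by (subst nn_integral_distr) (auto simp: idK)
  have \<Psi>m[measurable]: "\<Psi> \<in> borel_measurable borel"
  proof -
    have "case_prod \<psi> \<in> borel_measurable (borel \<Otimes>\<^sub>M DK)" using \<psi>' by (simp add: split_beta')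
    from DK.borel_measurable_nn_integral[OF this] show ?thesis by (simp add: \<Psi>DK[abs_def])
  qed
  have f_meas: "(\<lambda>\<omega>. \<psi> (Z \<omega>) \<omega>) \<in> borel_measurable M"
    using measurable_compose[OF measurable_Pair[OF ZM idK] \<psi>] by simp
  have g_meas: "(\<lambda>\<omega>. \<Psi> (Z \<omega>)) \<in> borel_measurable H"
    using measurable_compose[OF ZH \<Psi>m] .
  have key: "(\<integral>\<^sup>+x\<in>A. \<psi> (Z x) x \<partial>M) = (\<integral>\<^sup>+x\<in>A. \<Psi> (Z x) \<partial>M)" if A: "A \<in> sets H" for A
  proof -
    have AG: "A \<in> sets G" using A HG by blast
    have idG[measurable]: "(\<lambda>x. x) \<in> measurable M G"
      by (rule measurable_from_subalg[OF G]) simp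
    have iv: "prob_space.indep_var M G (\<lambda>x. x) K (\<lambda>x. x)"
      by (rule indep_var_sub[OF P ind G K measurable_ident_sets[OF refl] measurable_ident_sets[OF refl]])
    define DG where "DG = distr M G (\<lambda>x. x)"
    interpret DG: prob_space DG unfolding DG_def by (rule prob_space_distr[OF idG])
    have sDG: "sets DG = sets G" by (simp add: DG_def)
    have dist: "DG \<Otimes>\<^sub>M DK = distr M (G \<Otimes>\<^sub>M K) (\<lambda>x. (x, x))"
      using iv unfolding prob_space.indep_var_distribution_eq[OF P] DG_def DK_def by blast
    define F where "F q = ennreal (indicator A (fst q)) * \<psi> (Z (fst q)) (snd q)" for q :: "'a \<times> 'a"
    have Fm: "F \<in> borel_measurable (G \<Otimes>\<^sub>M K)"
    proof -
      have "(\<lambda>q. \<psi> (Z (fst q)) (snd q)) \<in> borel_measurable (G \<Otimes>\<^sub>M K)"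
        using measurable_compose[OF _ \<psi>, of "\<lambda>q. (Z (fst q), snd q)"] Z by simp
      moreover have "(\<lambda>q. ennreal (indicator A (fst q) :: real)) \<in> borel_measurable (G \<Otimes>\<^sub>M K)"
        using AG by measurable
      ultimately show ?thesis unfolding F_def by (rule borel_measurable_times_ennreal[rotated])
    qed
    have FmDG: "F \<in> borel_measurable (DG \<Otimes>\<^sub>M DK)"
      using Fm by (simp add: measurable_cong_sets[OF sets_pair_measure_cong[OF sDG sDK] refl])
    have "(\<integral>\<^sup>+x\<in>A. \<psi> (Z x) x \<partial>M) = (\<integral>\<^sup>+x. F (x, x) \<partial>M)"
      by (rule nn_integral_cong) (simp add: F_def mult.commute indicator_def)
    also have "\<dots> = (\<integral>\<^sup>+q. F q \<partial>distr M (G \<Otimes>\<^sub>M K) (\<lambda>x. (x, x)))"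
      by (rule nn_integral_distr[symmetric]) (auto intro: Fm)
    also have "\<dots> = (\<integral>\<^sup>+q. F q \<partial>(DG \<Otimes>\<^sub>M DK))" by (simp add: dist)
    also have "\<dots> = (\<integral>\<^sup>+w. \<integral>\<^sup>+\<omega>. F (w, \<omega>) \<partial>DK \<partial>DG)"
      by (rule DK.nn_integral_fst[symmetric, OF FmDG])
    also have "\<dots> = (\<integral>\<^sup>+w. ennreal (indicator A w) * \<Psi> (Z w) \<partial>DG)"
    proof (rule nn_integral_cong)
      fix w
      have "(\<integral>\<^sup>+\<omega>. F (w, \<omega>) \<partial>DK) = ennreal (indicator A w) * (\<integral>\<^sup>+\<omega>. \<psi> (Z w) \<omega> \<partial>DK)"
        unfolding F_def fst_conv snd_conv by (rule nn_integral_cmult) (simp add: measurable_cong_sets[OF sDK refl])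
      then show "(\<integral>\<^sup>+\<omega>. F (w, \<omega>) \<partial>DK) = ennreal (indicator A w) * \<Psi> (Z w)" by (simp add: \<Psi>DK)
    qed
    also have "\<dots> = (\<integral>\<^sup>+x. ennreal (indicator A x) * \<Psi> (Z x) \<partial>M)"
    proof -
      have "(\<lambda>w. ennreal (indicator A w :: real) * \<Psi> (Z w)) \<in> borel_measurable G"
        using AG Z by measurable
      then show ?thesis unfolding DG_def using nn_integral_distr[OF idG] by simp
    qed
    also have "\<dots> = (\<integral>\<^sup>+x\<in>A. \<Psi> (Z x) \<partial>M)"
      by (rule nn_integral_cong) (simp add: mult.commute indicator_def)
    finally show ?thesis .
  qed
  have "AE x in M. \<Psi> (Z x) = nn_cond_exp M H (\<lambda>\<omega>. \<psi> (Z \<omega>) \<omega>) x"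
    by (rule nn_cond_exp_charact[OF _ f_meas g_meas]) (simp add: key)
  then show ?thesis by (auto simp: \<Psi>_def)
qed


lemma freeze_real:
  fixes Z :: "'a \<Rightarrow> real^'d" and \<phi> :: "real^'d \<Rightarrow> 'a \<Rightarrow> real"
  assumes P: "prob_space M"
    and H: "subalgebra M H" and HG: "sets H \<subseteq> sets G" and G: "subalgebra M G"
    and K: "subalgebra M K"
    and ind: "prob_space.indep_set M (sets G) (sets K)"
    and Z: "Z \<in> borel_measurable G" and ZH: "Z \<in> borel_measurable H"
    and \<phi>: "(\<lambda>p. \<phi> (fst p) (snd p)) \<in> borel_measurable (borel \<Otimes>\<^sub>M K)"
    and int: "\<And>\<theta>. integrable M (\<phi> \<theta>)"
  shows "AE \<omega> in M. real_cond_exp M H (\<lambda>\<omega>. \<phi> (Z \<omega>) \<omega>) \<omega> = (\<integral>\<omega>'. \<phi> (Z \<omega>) \<omega>' \<partial>M)"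
proof -
  have p1: "(\<lambda>p. ennreal (\<phi> (fst p) (snd p))) \<in> borel_measurable (borel \<Otimes>\<^sub>M K)"
    using \<phi> by measurable
  have p2: "(\<lambda>p. ennreal (- \<phi> (fst p) (snd p))) \<in> borel_measurable (borel \<Otimes>\<^sub>M K)"
    using \<phi> by measurable
  have A1: "AE \<omega> in M. nn_cond_exp M H (\<lambda>\<omega>. ennreal (\<phi> (Z \<omega>) \<omega>)) \<omega> = (\<integral>\<^sup>+\<omega>'. ennreal (\<phi> (Z \<omega>) \<omega>') \<partial>M)"
    using freeze_nn[OF P H HG G K ind Z ZH, of "\<lambda>\<theta> \<omega>. ennreal (\<phi> \<theta> \<omega>)"] p1 by simp
  have A2: "AE \<omega> in M. nn_cond_exp M H (\<lambda>\<omega>. ennreal (- \<phi> (Z \<omega>) \<omega>)) \<omega> = (\<integral>\<^sup>+\<omega>'. ennreal (- \<phi> (Z \<omega>) \<omega>') \<partial>M)"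
    using freeze_nn[OF P H HG G K ind Z ZH, of "\<lambda>\<theta> \<omega>. ennreal (- \<phi> \<theta> \<omega>)"] p2 by simp
  show ?thesis using A1 A2
    by eventually_elim (simp add: real_cond_exp_def real_lebesgue_integral_def[OF int])
qed

lemma expand_gprime:
  fixes Phi :: "real^'d" and G :: "'n::finite \<Rightarrow> real^'d"
  shows "gprime a Phi h m1 G m2 $ j =
    (\<Sum>i\<in>UNIV. \<Sum>l\<in>UNIV. \<Sum>m\<in>UNIV. a i * (h i * (h l * (G l $ m * (Phi $ m * Phi $ j))))) +
    (\<Sum>l\<in>UNIV. \<Sum>m\<in>UNIV. m1 * (h l * (G l $ m * (Phi $ m * Phi $ j)))) +
    (\<Sum>i\<in>UNIV. a i * (m2 * (h i * Phi $ j))) + m2 * (m1 * Phi $ j)"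
proof -
  have B: "(\<Sum>l\<in>UNIV. (G l \<bullet> Phi) * h l) = (\<Sum>l\<in>UNIV. \<Sum>m\<in>UNIV. h l * (G l $ m * Phi $ m))"
    by (simp add: inner_vec_def sum_distrib_left sum_distrib_right mult.commute mult.left_commute)
  have "gprime a Phi h m1 G m2 $ j =
     ((\<Sum>i\<in>UNIV. a i * h i) + m1) * ((\<Sum>l\<in>UNIV. \<Sum>m\<in>UNIV. h l * (G l $ m * Phi $ m)) + m2) * Phi $ j"
    by (simp add: gprime_def B)
  also have "\<dots> = (\<Sum>i\<in>UNIV. a i * h i) * (\<Sum>l\<in>UNIV. \<Sum>m\<in>UNIV. h l * (G l $ m * Phi $ m)) * Phi $ j
      + m1 * (\<Sum>l\<in>UNIV. \<Sum>m\<in>UNIV. h l * (G l $ m * Phi $ m)) * Phi $ j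
      + (\<Sum>i\<in>UNIV. a i * h i) * m2 * Phi $ j + m1 * m2 * Phi $ j"
    by (simp add: algebra_simps)
  also have "(\<Sum>i\<in>UNIV. a i * h i) * (\<Sum>l\<in>UNIV. \<Sum>m\<in>UNIV. h l * (G l $ m * Phi $ m)) * Phi $ j
     = (\<Sum>i\<in>UNIV. \<Sum>l\<in>UNIV. \<Sum>m\<in>UNIV. a i * (h i * (h l * (G l $ m * (Phi $ m * Phi $ j)))))"
  proof -
    define X where "X = (\<Sum>l\<in>UNIV. \<Sum>m\<in>UNIV. h l * (G l $ m * Phi $ m)) * Phi $ j"
    have X: "X = (\<Sum>l\<in>UNIV. \<Sum>m\<in>UNIV. h l * (G l $ m * (Phi $ m * Phi $ j)))"
      unfolding X_def by (simp add: sum_distrib_right mult.assoc)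
    have "(\<Sum>i\<in>UNIV. a i * h i) * (\<Sum>l\<in>UNIV. \<Sum>m\<in>UNIV. h l * (G l $ m * Phi $ m)) * Phi $ j
       = (\<Sum>i\<in>UNIV. a i * h i) * X" by (simp add: X_def mult.assoc)
    also have "\<dots> = (\<Sum>i\<in>UNIV. a i * (h i * X))" by (simp add: sum_distrib_right mult.assoc)
    also have "\<dots> = (\<Sum>i\<in>UNIV. \<Sum>l\<in>UNIV. \<Sum>m\<in>UNIV. a i * (h i * (h l * (G l $ m * (Phi $ m * Phi $ j)))))"
      unfolding X by (simp add: sum_distrib_left)
    finally show ?thesis .
  qed
  also have "m1 * (\<Sum>l\<in>UNIV. \<Sum>m\<in>UNIV. h l * (G l $ m * Phi $ m)) * Phi $ j
     = (\<Sum>l\<in>UNIV. \<Sum>m\<in>UNIV. m1 * (h l * (G l $ m * (Phi $ m * Phi $ j))))"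
    by (simp add: sum_distrib_left sum_distrib_right mult.assoc mult.left_commute)
  also have "(\<Sum>i\<in>UNIV. a i * h i) * m2 * Phi $ j = (\<Sum>i\<in>UNIV. a i * (m2 * (h i * Phi $ j)))"
    by (simp add: sum_distrib_left sum_distrib_right mult.assoc mult.left_commute)
  also have "m1 * m2 * Phi $ j = m2 * (m1 * Phi $ j)" by simp
  finally show ?thesis .
qed


lemma Int_stable_sets: "Int_stable (sets N)"
  unfolding Int_stable_def by auto

lemma expect_fixed:
  fixes M :: "'a measure" and S :: "'x measure"
    and D :: "'n::finite \<Rightarrow> 'x measure"
    and gf :: "'n \<Rightarrow> real^'d \<Rightarrow> 'x \<Rightarrow> real^'d"
    and gF :: "'n \<Rightarrow> real^'d \<Rightarrow> real^'d"
    and Phi :: "nat \<Rightarrow> 'a \<Rightarrow> real^'d"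
    and h :: "nat \<Rightarrow> 'n \<Rightarrow> 'a \<Rightarrow> real"
    and c a :: "'n \<Rightarrow> real"
    and n1 n2 :: "nat \<Rightarrow> 'a \<Rightarrow> real"
    and xi :: "nat \<Rightarrow> 'n \<Rightarrow> 'a \<Rightarrow> 'x"
    and E :: "'n rvar \<Rightarrow> 'a set set"
  assumes P: "prob_space M"
    and ind: "prob_space.indep_sets M E UNIV" and IS: "\<And>v. Int_stable (E v)" and EM: "\<And>v. E v \<subseteq> sets M"
    and mPhi: "Phi k \<in> borel_measurable (Sg M E {PhiV k})"
    and mh: "\<And>i. h k i \<in> borel_measurable (Sg M E {HV k i})"
    and mn1: "n1 k \<in> borel_measurable (Sg M E {N1V k})"
    and mn2: "n2 k \<in> borel_measurable (Sg M E {N2V k})"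
    and mxi: "\<And>i. xi k i \<in> measurable (Sg M E {XiV k i}) S"
    and D_sets: "\<And>i. sets (D i) = sets S"
    and gf_int: "\<And>i \<theta>. integrable (D i) (gf i \<theta>)"
    and gf_exp: "\<And>i \<theta>. (\<integral>\<xi>. gf i \<theta> \<xi> \<partial>D i) = gF i \<theta>"
    and Phi_orth: "\<And>j l. j \<noteq> l \<Longrightarrow> prob_space.expectation M (\<lambda>\<omega>. Phi k \<omega> $ j * Phi k \<omega> $ l) = 0"
    and Phi_sq: "\<And>j. prob_space.expectation M (\<lambda>\<omega>. (Phi k \<omega> $ j)^2) = b1"
    and Phi_bound: "\<And>\<omega>. \<omega> \<in> space M \<Longrightarrow> norm (Phi k \<omega>) \<le> b2"
    and h_sq_int: "\<And>i. integrable M (\<lambda>\<omega>. (h k i \<omega>)^2)"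
    and h_mean: "\<And>i. prob_space.expectation M (h k i) = 0"
    and h_var: "\<And>i. prob_space.expectation M (\<lambda>\<omega>. (h k i \<omega>)^2) = c i"
    and c_pos: "\<And>i. c i > 0"
    and a_def: "\<And>i. a i = 1 / c i"
    and n1_sq_int: "integrable M (\<lambda>\<omega>. (n1 k \<omega>)^2)"
    and n2_sq_int: "integrable M (\<lambda>\<omega>. (n2 k \<omega>)^2)"
    and n1_mean: "prob_space.expectation M (n1 k) = 0"
    and n2_mean: "prob_space.expectation M (n2 k) = 0"
    and xi_distr: "\<And>i. distr M S (xi k i) = D i"
  shows "integrable M (\<lambda>\<omega>. gprime a (Phi k \<omega>) (\<lambda>i. h k i \<omega>) (n1 k \<omega>) (\<lambda>i. gf i \<theta> (xi k i \<omega>)) (n2 k \<omega>) $ j)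
     \<and> (\<integral>\<omega>. gprime a (Phi k \<omega>) (\<lambda>i. h k i \<omega>) (n1 k \<omega>) (\<lambda>i. gf i \<theta> (xi k i \<omega>)) (n2 k \<omega>) $ j \<partial>M)
        = b1 * (\<Sum>i\<in>UNIV. gF i \<theta>) $ j"
proof -
  interpret prob_space M by fact
  note lift = Sg_mono_meas[of E M, OF EM]
  note toM = Sg_meas_M[of E M, OF EM]
  note IP = indep_prod[of M E, OF P ind IS _ EM]
  define Pm where "Pm m \<omega> = Phi k \<omega> $ m" for m \<omega>
  define H where "H i \<omega> = h k i \<omega>" for i \<omega>
  define G where "G l m \<omega> = gf l \<theta> (xi k l \<omega>) $ m" for l m \<omega>
  define Q where "Q l m \<omega> = G l m \<omega> * (Pm m \<omega> * Pm j \<omega>)" for l m \<omega>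
  define R where "R l m \<omega> = H l \<omega> * Q l m \<omega>" for l m \<omega>
  have mP: "Pm m \<in> borel_measurable (Sg M E {PhiV k})" for m
    unfolding Pm_def using mPhi by measurable
  have gfS: "gf l \<theta> \<in> borel_measurable S" for l
    using borel_measurable_integrable[OF gf_int[of l \<theta>]] by (simp add: measurable_cong_sets[OF D_sets refl])
  have mG: "G l m \<in> borel_measurable (Sg M E {XiV k l})" for l m
    unfolding G_def using measurable_compose[OF mxi gfS] by measurable
  have mH: "H i \<in> borel_measurable (Sg M E {HV k i})" for i
    unfolding H_def using mh by simp
  have mQ: "Q l m \<in> borel_measurable (Sg M E {XiV k l, PhiV k})" for l m
  proof -
    have [measurable]: "G l m \<in> borel_measurable (Sg M E {XiV k l, PhiV k})" by (rule lift[OF _ mG]) auto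
    have [measurable]: "Pm m' \<in> borel_measurable (Sg M E {XiV k l, PhiV k})" for m' by (rule lift[OF _ mP]) auto
    show ?thesis unfolding Q_def by measurable
  qed
  have mR: "R l m \<in> borel_measurable (Sg M E {HV k l, XiV k l, PhiV k})" for l m
  proof -
    have [measurable]: "Q l m \<in> borel_measurable (Sg M E {HV k l, XiV k l, PhiV k})" by (rule lift[OF _ mQ]) auto
    have [measurable]: "H l \<in> borel_measurable (Sg M E {HV k l, XiV k l, PhiV k})" by (rule lift[OF _ mH]) auto
    show ?thesis unfolding R_def by measurable
  qed
  have iH: "integrable M (H i)" for i
    using square_integrable_imp_integrable[OF toM[OF mH[of i]]] h_sq_int[of i] by (simp add: H_def)
  have iHH: "integrable M (\<lambda>\<omega>. H i \<omega> * H i \<omega>)" for i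
    using h_sq_int[of i] by (simp add: H_def power2_eq_square)
  have EHH: "(\<integral>\<omega>. H i \<omega> * H i \<omega> \<partial>M) = c i" for i
    using h_var[of i] by (simp add: H_def power2_eq_square)
  have in1: "integrable M (n1 k)"
    using square_integrable_imp_integrable[OF toM[OF mn1] n1_sq_int] .
  have in2: "integrable M (n2 k)"
    using square_integrable_imp_integrable[OF toM[OF mn2] n2_sq_int] .
  have Pb: "\<bar>Pm m \<omega>\<bar> \<le> b2" if "\<omega> \<in> space M" for m \<omega>
    using component_le_norm_cart[of "Phi k \<omega>" m] Phi_bound[OF that] by (simp add: Pm_def)
  have iPj: "integrable M (Pm m)" for m
    by (rule integrable_const_bound[where B=b2]) (use Pb toM[OF mP] in auto)
  have iPP: "integrable M (\<lambda>\<omega>. Pm m \<omega> * Pm j \<omega>)" for m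
  proof (rule integrable_const_bound[where B="b2 * b2"])
    show "AE x in M. norm (Pm m x * Pm j x) \<le> b2 * b2"
    proof (rule AE_I2)
      fix x assume x: "x \<in> space M"
      show "norm (Pm m x * Pm j x) \<le> b2 * b2"
        using Pb[OF x, of m] Pb[OF x, of j] by (simp add: abs_mult mult_mono')
    qed
    show "(\<lambda>\<omega>. Pm m \<omega> * Pm j \<omega>) \<in> borel_measurable M" using toM[OF mP] by measurable
  qed
  have EPP: "(\<integral>\<omega>. Pm m \<omega> * Pm j \<omega> \<partial>M) = (if m = j then b1 else 0)" for m
    using Phi_orth[of m j] Phi_sq[of j] by (auto simp: Pm_def power2_eq_square)
  have iG: "integrable M (G l m)" and EG: "(\<integral>\<omega>. G l m \<omega> \<partial>M) = gF l \<theta> $ m" for l m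
  proof -
    have xm: "xi k l \<in> measurable M S" by (rule toM[OF mxi])
    have fm: "(\<lambda>x. gf l \<theta> x $ m) \<in> borel_measurable S" using gfS by measurable
    have e: "(\<lambda>x. gf l \<theta> x $ m) = (\<lambda>x. gf l \<theta> x \<bullet> axis m 1)" by (simp add: inner_axis)
    have "integrable (D l) (\<lambda>x. gf l \<theta> x $ m)" unfolding e using gf_int by simp
    then show "integrable M (G l m)"
      using integrable_distr_eq[OF xm fm] xi_distr[of l] by (simp add: G_def[abs_def])
    have "(\<integral>\<omega>. G l m \<omega> \<partial>M) = (\<integral>x. gf l \<theta> x $ m \<partial>distr M S (xi k l))"
      unfolding G_def by (rule integral_distr[OF xm fm, symmetric])
    also have "\<dots> = (\<integral>x. gf l \<theta> x \<bullet> axis m 1 \<partial>D l)" by (simp add: xi_distr e)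
    also have "\<dots> = (\<integral>x. gf l \<theta> x \<partial>D l) \<bullet> axis m 1"
      by (rule integral_inner_left) (simp add: gf_int)
    also have "\<dots> = gF l \<theta> $ m" using gf_exp by (simp add: inner_axis)
    finally show "(\<integral>\<omega>. G l m \<omega> \<partial>M) = gF l \<theta> $ m" .
  qed
  have Q: "integrable M (Q l m)" "(\<integral>\<omega>. Q l m \<omega> \<partial>M) = gF l \<theta> $ m * (if m = j then b1 else 0)" for l m
  proof -
    have mPP: "(\<lambda>\<omega>. Pm m \<omega> * Pm j \<omega>) \<in> borel_measurable (Sg M E {PhiV k})" using mP by measurable
    note r = IP[of "{XiV k l}" "{PhiV k}", OF _ mG[of l m] mPP iG[of l m] iPP[of m]]
    show "integrable M (Q l m)" using r by (simp add: Q_def[abs_def])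
    show "(\<integral>\<omega>. Q l m \<omega> \<partial>M) = gF l \<theta> $ m * (if m = j then b1 else 0)" using r by (simp add: Q_def[abs_def] EG EPP)
  qed
  have R: "integrable M (R l m)" "(\<integral>\<omega>. R l m \<omega> \<partial>M) = 0" for l m
  proof -
    note r = IP[of "{HV k l}" "{XiV k l, PhiV k}", OF _ mH[of l] mQ[of l m] iH[of l] Q(1)[of l m]]
    show "integrable M (R l m)" using r by (simp add: R_def[abs_def])
    show "(\<integral>\<omega>. R l m \<omega> \<partial>M) = 0" using r h_mean by (simp add: R_def[abs_def] H_def[abs_def])
  qed
  have T1c: "integrable M (\<lambda>\<omega>. a i * (H i \<omega> * R l m \<omega>)) \<and>
      (\<integral>\<omega>. a i * (H i \<omega> * R l m \<omega>) \<partial>M) = (if i = l then gF l \<theta> $ m * (if m = j then b1 else 0) else 0)" for i l m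
  proof (cases "i = l")
    case True
    have mHH: "(\<lambda>\<omega>. H l \<omega> * H l \<omega>) \<in> borel_measurable (Sg M E {HV k l})" using mH by measurable
    note r = IP[of "{HV k l}" "{XiV k l, PhiV k}", OF _ mHH mQ[of l m] iHH[of l] Q(1)[of l m]]
    have eq: "(\<lambda>\<omega>. a i * (H i \<omega> * R l m \<omega>)) = (\<lambda>\<omega>. a l * (H l \<omega> * H l \<omega> * Q l m \<omega>))"
      using True by (simp add: R_def mult.assoc)
    have i1: "integrable M (\<lambda>\<omega>. a i * (H i \<omega> * R l m \<omega>))" unfolding eq using r by simp
    have alc: "a l * c l = 1" using c_pos[of l] by (simp add: a_def)
    have "(\<integral>\<omega>. a i * (H i \<omega> * R l m \<omega>) \<partial>M) = (if i = l then gF l \<theta> $ m * (if m = j then b1 else 0) else 0)"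
    proof -
      have "(\<integral>\<omega>. a l * (H l \<omega> * H l \<omega> * Q l m \<omega>) \<partial>M) = a l * (\<integral>\<omega>. H l \<omega> * H l \<omega> * Q l m \<omega> \<partial>M)"
        by (rule integral_mult_right_zero)
      also have "\<dots> = (a l * c l) * (gF l \<theta> $ m * (if m = j then b1 else 0))"
        using r by (simp add: EHH Q(2))
      finally have "(\<integral>\<omega>. a l * (H l \<omega> * H l \<omega> * Q l m \<omega>) \<partial>M) = gF l \<theta> $ m * (if m = j then b1 else 0)"
        using alc by simp
      then have "(\<integral>\<omega>. a i * (H i \<omega> * R l m \<omega>) \<partial>M) = gF l \<theta> $ m * (if m = j then b1 else 0)"
        by (simp only: eq)
      then show ?thesis using True by simp
    qed
    then show ?thesis using i1 by simp
  next
    case False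
    note r = IP[of "{HV k i}" "{HV k l, XiV k l, PhiV k}", OF _ mH[of i] mR[of l m] iH[of i] R(1)[of l m]]
    show ?thesis using r False by (simp add: R(2))
  qed
  note T1 = conjunct1[OF T1c] conjunct2[OF T1c]
  have T2: "integrable M (\<lambda>\<omega>. n1 k \<omega> * R l m \<omega>)" "(\<integral>\<omega>. n1 k \<omega> * R l m \<omega> \<partial>M) = 0" for l m
    using IP[of "{N1V k}" "{HV k l, XiV k l, PhiV k}", OF _ mn1 mR[of l m] in1 R(1)[of l m]] n1_mean by auto
  have HP: "integrable M (\<lambda>\<omega>. H i \<omega> * Pm j \<omega>)" for i
    using IP[of "{HV k i}" "{PhiV k}", OF _ mH[of i] mP[of j] iH[of i] iPj[of j]] by auto
  have mHP: "(\<lambda>\<omega>. H i \<omega> * Pm j \<omega>) \<in> borel_measurable (Sg M E {HV k i, PhiV k})" for i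
  proof -
    have [measurable]: "H i \<in> borel_measurable (Sg M E {HV k i, PhiV k})" by (rule lift[OF _ mH]) auto
    have [measurable]: "Pm j \<in> borel_measurable (Sg M E {HV k i, PhiV k})" by (rule lift[OF _ mP]) auto
    show ?thesis by measurable
  qed
  have T3: "integrable M (\<lambda>\<omega>. n2 k \<omega> * (H i \<omega> * Pm j \<omega>))" "(\<integral>\<omega>. n2 k \<omega> * (H i \<omega> * Pm j \<omega>) \<partial>M) = 0" for i
    using IP[of "{N2V k}" "{HV k i, PhiV k}", OF _ mn2 mHP[of i] in2 HP[of i]] n2_mean by auto
  have n1P: "integrable M (\<lambda>\<omega>. n1 k \<omega> * Pm j \<omega>)"
    using IP[of "{N1V k}" "{PhiV k}", OF _ mn1 mP[of j] in1 iPj[of j]] by auto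
  have mn1P: "(\<lambda>\<omega>. n1 k \<omega> * Pm j \<omega>) \<in> borel_measurable (Sg M E {N1V k, PhiV k})"
  proof -
    have [measurable]: "n1 k \<in> borel_measurable (Sg M E {N1V k, PhiV k})" by (rule lift[OF _ mn1]) auto
    have [measurable]: "Pm j \<in> borel_measurable (Sg M E {N1V k, PhiV k})" by (rule lift[OF _ mP]) auto
    show ?thesis by measurable
  qed
  have T4: "integrable M (\<lambda>\<omega>. n2 k \<omega> * (n1 k \<omega> * Pm j \<omega>))" "(\<integral>\<omega>. n2 k \<omega> * (n1 k \<omega> * Pm j \<omega>) \<partial>M) = 0"
    using IP[of "{N2V k}" "{N1V k, PhiV k}", OF _ mn2 mn1P in2 n1P] n2_mean by auto
  have expand: "gprime a (Phi k \<omega>) (\<lambda>i. h k i \<omega>) (n1 k \<omega>) (\<lambda>i. gf i \<theta> (xi k i \<omega>)) (n2 k \<omega>) $ j =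
    (\<Sum>i\<in>UNIV. \<Sum>l\<in>UNIV. \<Sum>m\<in>UNIV. a i * (H i \<omega> * R l m \<omega>)) +
    (\<Sum>l\<in>UNIV. \<Sum>m\<in>UNIV. n1 k \<omega> * R l m \<omega>) +
    (\<Sum>i\<in>UNIV. a i * (n2 k \<omega> * (H i \<omega> * Pm j \<omega>))) + n2 k \<omega> * (n1 k \<omega> * Pm j \<omega>)" for \<omega>
    unfolding expand_gprime by (simp add: R_def Q_def G_def H_def Pm_def)
  have int1: "integrable M (\<lambda>\<omega>. \<Sum>i\<in>UNIV. \<Sum>l\<in>UNIV. \<Sum>m\<in>UNIV. a i * (H i \<omega> * R l m \<omega>))"
    by (intro Bochner_Integration.integrable_sum T1(1))
  have int2: "integrable M (\<lambda>\<omega>. \<Sum>l\<in>UNIV. \<Sum>m\<in>UNIV. n1 k \<omega> * R l m \<omega>)"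
    by (intro Bochner_Integration.integrable_sum T2(1))
  have int3: "integrable M (\<lambda>\<omega>. \<Sum>i\<in>UNIV. a i * (n2 k \<omega> * (H i \<omega> * Pm j \<omega>)))"
    by (intro Bochner_Integration.integrable_sum integrable_mult_right T3(1))
  have v1: "(\<integral>\<omega>. (\<Sum>i\<in>UNIV. \<Sum>l\<in>UNIV. \<Sum>m\<in>UNIV. a i * (H i \<omega> * R l m \<omega>)) \<partial>M) = b1 * (\<Sum>i\<in>UNIV. gF i \<theta>) $ j"
  proof -
    have "(\<integral>\<omega>. (\<Sum>i\<in>UNIV. \<Sum>l\<in>UNIV. \<Sum>m\<in>UNIV. a i * (H i \<omega> * R l m \<omega>)) \<partial>M)
        = (\<Sum>i\<in>UNIV. \<Sum>l\<in>UNIV. \<Sum>m\<in>UNIV. (if i = l then gF l \<theta> $ m * (if m = j then b1 else 0) else 0))"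
      using T1 by (simp add: integral_sum Bochner_Integration.integrable_sum)
    also have "\<dots> = (\<Sum>i\<in>UNIV. \<Sum>l\<in>UNIV. (if i = l then gF l \<theta> $ j * b1 else 0))"
    proof (intro sum.cong refl)
      fix i l
      show "(\<Sum>m\<in>UNIV. (if i = l then gF l \<theta> $ m * (if m = j then b1 else 0) else 0)) = (if i = l then gF l \<theta> $ j * b1 else 0)"
        by (cases "i = l") (simp_all add: if_distrib[of "\<lambda>x. _ * x"] sum.delta' cong: if_cong)
    qed
    also have "\<dots> = (\<Sum>l\<in>UNIV. gF l \<theta> $ j * b1)"
      by (simp add: sum.delta)
    finally show ?thesis by (simp add: sum_distrib_left mult.commute)
  qed
  have v2: "(\<integral>\<omega>. (\<Sum>l\<in>UNIV. \<Sum>m\<in>UNIV. n1 k \<omega> * R l m \<omega>) \<partial>M) = 0"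
    using T2 by (simp add: integral_sum Bochner_Integration.integrable_sum)
  have v3: "(\<integral>\<omega>. (\<Sum>i\<in>UNIV. a i * (n2 k \<omega> * (H i \<omega> * Pm j \<omega>))) \<partial>M) = 0"
  proof -
    have "(\<integral>\<omega>. (\<Sum>i\<in>UNIV. a i * (n2 k \<omega> * (H i \<omega> * Pm j \<omega>))) \<partial>M) = (\<Sum>i\<in>UNIV. (\<integral>\<omega>. a i * (n2 k \<omega> * (H i \<omega> * Pm j \<omega>)) \<partial>M))"
      by (rule Bochner_Integration.integral_sum) (intro integrable_mult_right T3(1))
    also have "\<dots> = 0" by (simp add: T3(2))
    finally show ?thesis .
  qed
  show ?thesis
    unfolding expand using int1 int2 int3 T4 v1 v2 v3 by simp
qed

fun ridx :: "'n rvar \<Rightarrow> nat option" where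
  "ridx Theta0 = None"
| "ridx (PhiV m) = Some m"
| "ridx (HV m i) = Some m"
| "ridx (N1V m) = Some m"
| "ridx (N2V m) = Some m"
| "ridx (XiV m i) = Some m"

definition Past :: "nat \<Rightarrow> 'n rvar set" where
  "Past m = {v. ridx v = None \<or> (\<exists>j<m. ridx v = Some j)}"

lemma gprime_meas:
  fixes Phi' :: "'a \<Rightarrow> real^'d" and G :: "'n::finite \<Rightarrow> 'a \<Rightarrow> real^'d"
  assumes [measurable]: "Phi' \<in> borel_measurable N" "\<And>i. hh i \<in> borel_measurable N"
    "m1 \<in> borel_measurable N" "\<And>i. G i \<in> borel_measurable N" "m2 \<in> borel_measurable N"
  shows "(\<lambda>\<omega>. gprime a (Phi' \<omega>) (\<lambda>i. hh i \<omega>) (m1 \<omega>) (\<lambda>i. G i \<omega>) (m2 \<omega>)) \<in> borel_measurable N"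
  unfolding gprime_def by measurable

theorem lemma3:
  fixes M :: "'a measure" and S :: "'x measure"
    and D :: "'n::finite \<Rightarrow> 'x measure"
    and f :: "'n \<Rightarrow> real^'d \<Rightarrow> 'x \<Rightarrow> real"
    and gf :: "'n \<Rightarrow> real^'d \<Rightarrow> 'x \<Rightarrow> real^'d"
    and gF :: "'n \<Rightarrow> real^'d \<Rightarrow> real^'d"
    and Hs :: "'n \<Rightarrow> real^'d \<Rightarrow> real^'d^'d"
    and L :: "'x \<Rightarrow> real"
    and b b1 b2 \<sigma>1 \<sigma>2 :: real
    and Phi :: "nat \<Rightarrow> 'a \<Rightarrow> real^'d"
    and h :: "nat \<Rightarrow> 'n \<Rightarrow> 'a \<Rightarrow> real"
    and c a :: "'n \<Rightarrow> real"
    and n1 n2 :: "nat \<Rightarrow> 'a \<Rightarrow> real"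
    and xi :: "nat \<Rightarrow> 'n \<Rightarrow> 'a \<Rightarrow> 'x"
    and theta :: "nat \<Rightarrow> 'a \<Rightarrow> real^'d"
    and eta :: "nat \<Rightarrow> real"
    and k :: nat
  assumes P: "prob_space M"
    \<comment> \<open>data distributions and losses\<close>
    and D_prob: "\<And>i. prob_space (D i)"
    and D_sets: "\<And>i. sets (D i) = sets S"
    and f_grad: "\<And>i \<theta> \<xi>. ((\<lambda>t. f i t \<xi>) has_derivative (\<lambda>v. gf i \<theta> \<xi> \<bullet> v)) (at \<theta>)"
    and F_grad: "\<And>i \<theta>. ((\<lambda>t. \<integral>\<xi>. f i t \<xi> \<partial>D i) has_derivative (\<lambda>v. gF i \<theta> \<bullet> v)) (at \<theta>)"
    and gf_int: "\<And>i \<theta>. integrable (D i) (gf i \<theta>)"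
    and gf_exp: "\<And>i \<theta>. (\<integral>\<xi>. gf i \<theta> \<xi> \<partial>D i) = gF i \<theta>"
    \<comment> \<open>(i): continuous gradient and Hessian, Hessian bounded in spectral norm\<close>
    and gF_cont: "\<And>i. continuous_on UNIV (gF i)"
    and Hs_deriv: "\<And>i \<theta>. (gF i has_derivative (\<lambda>v. Hs i \<theta> *v v)) (at \<theta>)"
    and Hs_cont: "\<And>i. continuous_on UNIV (Hs i)"
    and Hs_bound: "\<And>i \<theta>. onorm (\<lambda>v. Hs i \<theta> *v v) \<le> b"
    \<comment> \<open>(ii): Lipschitz losses with finite expectation\<close>
    and f_lip: "\<And>i \<xi>. lipschitz_on (L \<xi>) UNIV (\<lambda>t. f i t \<xi>)"
    and f_int: "\<And>i \<theta>. integrable (D i) (f i \<theta>)"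
    \<comment> \<open>(iv): perturbations\<close>
    and Phi_meas: "\<And>k. Phi k \<in> borel_measurable M"
    and Phi_orth: "\<And>k j l. j \<noteq> l \<Longrightarrow> prob_space.expectation M (\<lambda>\<omega>. Phi k \<omega> $ j * Phi k \<omega> $ l) = 0"
    and Phi_sq: "\<And>k j. prob_space.expectation M (\<lambda>\<omega>. (Phi k \<omega> $ j)^2) = b1"
    and b1_pos: "b1 > 0"
    and Phi_bound: "\<And>k \<omega>. \<omega> \<in> space M \<Longrightarrow> norm (Phi k \<omega>) \<le> b2"
    and eta_pos: "\<And>k. eta k > 0"
    \<comment> \<open>wireless model\<close>
    and h_meas: "\<And>k i. h k i \<in> borel_measurable M"
    and h_sq_int: "\<And>k i. integrable M (\<lambda>\<omega>. (h k i \<omega>)^2)"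
    and h_mean: "\<And>k i. prob_space.expectation M (h k i) = 0"
    and h_var: "\<And>k i. prob_space.expectation M (\<lambda>\<omega>. (h k i \<omega>)^2) = c i"
    and c_pos: "\<And>i. c i > 0"
    and a_def: "\<And>i. a i = 1 / c i"
    and n1_meas: "\<And>k. n1 k \<in> borel_measurable M"
    and n2_meas: "\<And>k. n2 k \<in> borel_measurable M"
    and n1_sq_int: "\<And>k. integrable M (\<lambda>\<omega>. (n1 k \<omega>)^2)"
    and n2_sq_int: "\<And>k. integrable M (\<lambda>\<omega>. (n2 k \<omega>)^2)"
    and n1_mean: "\<And>k. prob_space.expectation M (n1 k) = 0"
    and n2_mean: "\<And>k. prob_space.expectation M (n2 k) = 0"
    and n1_var: "\<And>k. prob_space.expectation M (\<lambda>\<omega>. (n1 k \<omega>)^2) = \<sigma>1^2"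
    and n2_var: "\<And>k. prob_space.expectation M (\<lambda>\<omega>. (n2 k \<omega>)^2) = \<sigma>2^2"
    and xi_meas: "\<And>k i. xi k i \<in> measurable M S"
    and xi_distr: "\<And>k i. distr M S (xi k i) = D i"
    and theta0_meas: "theta 0 \<in> borel_measurable M"
    \<comment> \<open>mutual independence of all primitive random variables (and of the initial point)\<close>
    and indep: "prob_space.indep_sets M
       (\<lambda>v. case v of
           Theta0 \<Rightarrow> sets (vimage_algebra (space M) (theta 0) borel)
         | PhiV m \<Rightarrow> sets (vimage_algebra (space M) (Phi m) borel)
         | HV m i \<Rightarrow> sets (vimage_algebra (space M) (h m i) borel)
         | N1V m \<Rightarrow> sets (vimage_algebra (space M) (n1 m) borel)
         | N2V m \<Rightarrow> sets (vimage_algebra (space M) (n2 m) borel)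
         | XiV m i \<Rightarrow> sets (vimage_algebra (space M) (xi m i) S)) UNIV"
    \<comment> \<open>EFOFL iteration\<close>
    and iter: "\<And>m \<omega>. theta (Suc m) \<omega> = theta m \<omega> - eta m *\<^sub>R
         gprime a (Phi m \<omega>) (\<lambda>i. h m i \<omega>) (n1 m \<omega>) (\<lambda>i. gf i (theta m \<omega>) (xi m i \<omega>)) (n2 m \<omega>)"
  shows "\<forall>j. AE \<omega> in M.
     real_cond_exp M (hist M theta S xi k)
       (\<lambda>\<omega>. gprime a (Phi k \<omega>) (\<lambda>i. h k i \<omega>) (n1 k \<omega>) (\<lambda>i. gf i (theta k \<omega>) (xi k i \<omega>)) (n2 k \<omega>) $ j) \<omega>
     = b1 * (\<Sum>i\<in>UNIV. gF i (theta k \<omega>)) $ j"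
proof
  fix j
  interpret prob_space M by (rule P)
  define E :: "'n rvar \<Rightarrow> 'a set set" where "E = (\<lambda>v. case v of
           Theta0 \<Rightarrow> sets (vimage_algebra (space M) (theta 0) borel)
         | PhiV m \<Rightarrow> sets (vimage_algebra (space M) (Phi m) borel)
         | HV m i \<Rightarrow> sets (vimage_algebra (space M) (h m i) borel)
         | N1V m \<Rightarrow> sets (vimage_algebra (space M) (n1 m) borel)
         | N2V m \<Rightarrow> sets (vimage_algebra (space M) (n2 m) borel)
         | XiV m i \<Rightarrow> sets (vimage_algebra (space M) (xi m i) S))"
  have ind': "indep_sets E UNIV" using indep unfolding E_def .
  have EM: "E v \<subseteq> sets M" for v
  proof (cases v)
    case Theta0 then show ?thesis using measurable_iff_sets[THEN iffD1, OF theta0_meas] by (simp add: E_def)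
  next
    case (PhiV m) then show ?thesis using measurable_iff_sets[THEN iffD1, OF Phi_meas[of m]] by (simp add: E_def)
  next
    case (HV m i) then show ?thesis using measurable_iff_sets[THEN iffD1, OF h_meas[of m i]] by (simp add: E_def)
  next
    case (N1V m) then show ?thesis using measurable_iff_sets[THEN iffD1, OF n1_meas[of m]] by (simp add: E_def)
  next
    case (N2V m) then show ?thesis using measurable_iff_sets[THEN iffD1, OF n2_meas[of m]] by (simp add: E_def)
  next
    case (XiV m i) then show ?thesis using measurable_iff_sets[THEN iffD1, OF xi_meas[of m i]] by (simp add: E_def)
  qed
  have IS: "Int_stable (E v)" for v
    by (cases v) (simp_all add: E_def Int_stable_sets)
  note lift = Sg_mono_meas[of E M, OF EM]
  note gen = Sg_gen_meas[of E M, OF EM]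
  have fS: "f i t \<in> borel_measurable S" for i t
    using borel_measurable_integrable[OF f_int[of i t]] by (simp add: measurable_cong_sets[OF D_sets refl])
  have gfm: "(\<lambda>p. gf i (fst p) (snd p)) \<in> borel_measurable (borel \<Otimes>\<^sub>M S)" for i
    by (rule gf_meas[OF f_grad fS])
  have gfc: "(\<lambda>\<omega>. gf i (X \<omega>) (Y \<omega>)) \<in> borel_measurable N"
    if "X \<in> borel_measurable N" "Y \<in> measurable N S" for i X Y and N :: "'b measure"
    using measurable_compose[OF measurable_Pair[OF that] gfm[of i]] by simp
  have thmeas: "theta m \<in> borel_measurable (Sg M E (Past m))" for m
  proof (induction m)
    case 0
    show ?case by (rule gen[OF theta0_meas, of Theta0]) (auto simp: Past_def E_def)
  next
    case (Suc m)
    let ?N = "Sg M E (Past (Suc m))"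
    have [measurable]: "theta m \<in> borel_measurable ?N"
      by (rule lift[OF _ Suc.IH]) (auto simp: Past_def)
    have [measurable]: "Phi m \<in> borel_measurable ?N"
      by (rule gen[OF Phi_meas, of "PhiV m"]) (auto simp: Past_def E_def)
    have [measurable]: "h m i \<in> borel_measurable ?N" for i
      by (rule gen[OF h_meas, of "HV m i"]) (auto simp: Past_def E_def)
    have [measurable]: "n1 m \<in> borel_measurable ?N"
      by (rule gen[OF n1_meas, of "N1V m"]) (auto simp: Past_def E_def)
    have [measurable]: "n2 m \<in> borel_measurable ?N"
      by (rule gen[OF n2_meas, of "N2V m"]) (auto simp: Past_def E_def)
    have xm: "xi m i \<in> measurable ?N S" for i
      by (rule gen[OF xi_meas, of "XiV m i"]) (auto simp: Past_def E_def)
    have [measurable]: "(\<lambda>\<omega>. gf i (theta m \<omega>) (xi m i \<omega>)) \<in> borel_measurable ?N" for i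
      by (rule gfc[OF _ xm]) measurable
    have [measurable]: "(\<lambda>\<omega>. gprime a (Phi m \<omega>) (\<lambda>i. h m i \<omega>) (n1 m \<omega>) (\<lambda>i. gf i (theta m \<omega>) (xi m i \<omega>)) (n2 m \<omega>)) \<in> borel_measurable ?N"
      by (rule gprime_meas) measurable
    show ?case unfolding iter by measurable
  qed
  show "AE \<omega> in M.
     real_cond_exp M (hist M theta S xi k)
       (\<lambda>\<omega>. gprime a (Phi k \<omega>) (\<lambda>i. h k i \<omega>) (n1 k \<omega>) (\<lambda>i. gf i (theta k \<omega>) (xi k i \<omega>)) (n2 k \<omega>) $ j) \<omega>
     = b1 * (\<Sum>i\<in>UNIV. gF i (theta k \<omega>)) $ j"
  proof -
    define Now :: "'n rvar set" where "Now = {v. ridx v = Some k}"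
    let ?G = "Sg M E (Past k)"
    let ?K = "Sg M E Now"
    have disj: "Past k \<inter> Now = {}" by (auto simp: Past_def Now_def)
    have indGK: "indep_set (sets ?G) (sets ?K)"
      using indep_groups[of M E, OF P ind' IS disj] by (simp add: Sg_sets[of E M, OF EM])
    have Gsub: "subalgebra M ?G" and Ksub: "subalgebra M ?K" by (rule Sg_subalg[of E M, OF EM])+
    have spG: "space ?G = space M" by (rule Sg_space[of E M, OF EM])
    define gens where "gens = ((\<Union>j\<in>{..k}. sets (vimage_algebra (space M) (theta j) borel)) \<union>
      (\<Union>j\<in>{..<k}. \<Union>i. sets (vimage_algebra (space M) (xi j i) S)))"
    have gensG: "gens \<subseteq> sets ?G"
    proof -
      have "sets (vimage_algebra (space M) (theta j) borel) \<subseteq> sets ?G" if "j \<le> k" for j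
      proof -
        have "theta j \<in> borel_measurable ?G"
          by (rule lift[OF _ thmeas[of j]]) (use that in \<open>auto simp: Past_def\<close>)
        then show ?thesis using measurable_iff_sets[of "theta j" ?G borel] spG by simp
      qed
      moreover have "sets (vimage_algebra (space M) (xi j i) S) \<subseteq> sets ?G" if "j < k" for i j
      proof -
        have "xi j i \<in> measurable ?G S"
          by (rule gen[OF xi_meas, of "XiV j i"]) (use that in \<open>auto simp: Past_def E_def\<close>)
        then show ?thesis using measurable_iff_sets[of "xi j i" ?G S] spG by simp
      qed
      ultimately show ?thesis unfolding gens_def
        by (intro Un_least UN_least) auto
    qed
    have gensM: "gens \<subseteq> Pow (space M)"
      using gensG Sg_sub[of E M, OF EM] sets.sets_into_space by blast
    have hist_eq: "hist M theta S xi k = sigma (space M) gens" by (simp add: hist_def gens_def)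
    have sp_hist: "space (hist M theta S xi k) = space M" unfolding hist_eq using gensM by simp
    have sets_hist: "sets (hist M theta S xi k) = sigma_sets (space M) gens" unfolding hist_eq using gensM by simp
    have histG: "sets (hist M theta S xi k) \<subseteq> sets ?G"
      unfolding sets_hist using sets.sigma_sets_subset[of gens ?G] gensG spG by simp
    have Hsub: "subalgebra M (hist M theta S xi k)"
      using histG Sg_sub[of E M, OF EM] sp_hist by (auto simp: subalgebra_def)
    have ZG: "theta k \<in> borel_measurable ?G"
      by (rule lift[OF _ thmeas[of k]]) auto
    have ZH: "theta k \<in> borel_measurable (hist M theta S xi k)"
    proof -
      have "sets (vimage_algebra (space M) (theta k) borel) \<subseteq> gens"
        unfolding gens_def by (rule subset_trans[OF UN_upper[of k] Un_upper1]) simp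
      then have "sets (vimage_algebra (space (hist M theta S xi k)) (theta k) borel) \<subseteq> sets (hist M theta S xi k)"
        unfolding sp_hist sets_hist using sigma_sets_superset_generator by blast
      then show ?thesis unfolding measurable_iff_sets by (simp add: Pi_iff)
    qed
    have mPhi: "Phi k \<in> borel_measurable (Sg M E {PhiV k})"
      by (rule gen[OF Phi_meas, of "PhiV k"]) (auto simp: E_def)
    have mh: "h k i \<in> borel_measurable (Sg M E {HV k i})" for i
      by (rule gen[OF h_meas, of "HV k i"]) (auto simp: E_def)
    have mn1: "n1 k \<in> borel_measurable (Sg M E {N1V k})"
      by (rule gen[OF n1_meas, of "N1V k"]) (auto simp: E_def)
    have mn2: "n2 k \<in> borel_measurable (Sg M E {N2V k})"
      by (rule gen[OF n2_meas, of "N2V k"]) (auto simp: E_def)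
    have mxi: "xi k i \<in> measurable (Sg M E {XiV k i}) S" for i
      by (rule gen[OF xi_meas, of "XiV k i"]) (auto simp: E_def)
    define phi where "phi \<theta> \<omega> = gprime a (Phi k \<omega>) (\<lambda>i. h k i \<omega>) (n1 k \<omega>) (\<lambda>i. gf i \<theta> (xi k i \<omega>)) (n2 k \<omega>) $ j"
      for \<theta> \<omega>
    have EF: "integrable M (phi \<theta>) \<and> (\<integral>\<omega>. phi \<theta> \<omega> \<partial>M) = b1 * (\<Sum>i\<in>UNIV. gF i \<theta>) $ j" for \<theta>
      unfolding phi_def[abs_def]
      by (rule expect_fixed[where E=E and M=M and k=k and Phi=Phi and h=h and xi=xi and S=S and D=D and gf=gf and gF=gF and c=c and a=a and ?n1.0=n1 and ?n2.0=n2 and ?b1.0=b1 and ?b2.0=b2, OF P ind' IS EM mPhi mh mn1 mn2 mxi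
            D_sets gf_int gf_exp Phi_orth Phi_sq Phi_bound h_sq_int h_mean h_var c_pos a_def
            n1_sq_int n2_sq_int n1_mean n2_mean xi_distr])
    have phim: "(\<lambda>p. phi (fst p) (snd p)) \<in> borel_measurable (borel \<Otimes>\<^sub>M ?K)"
    proof -
      let ?N = "borel \<Otimes>\<^sub>M ?K"
      have [measurable]: "Phi k \<in> borel_measurable ?K"
        by (rule gen[OF Phi_meas, of "PhiV k"]) (auto simp: E_def Now_def)
      have [measurable]: "h k i \<in> borel_measurable ?K" for i
        by (rule gen[OF h_meas, of "HV k i"]) (auto simp: E_def Now_def)
      have [measurable]: "n1 k \<in> borel_measurable ?K"
        by (rule gen[OF n1_meas, of "N1V k"]) (auto simp: E_def Now_def)
      have [measurable]: "n2 k \<in> borel_measurable ?K"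
        by (rule gen[OF n2_meas, of "N2V k"]) (auto simp: E_def Now_def)
      have xK: "xi k i \<in> measurable ?K S" for i
        by (rule gen[OF xi_meas, of "XiV k i"]) (auto simp: E_def Now_def)
      have [measurable]: "(\<lambda>p. gf i (fst p) (xi k i (snd p))) \<in> borel_measurable ?N" for i
        by (rule gfc) (simp, rule measurable_compose[OF measurable_snd xK])
      have "(\<lambda>p. gprime a (Phi k (snd p)) (\<lambda>i. h k i (snd p)) (n1 k (snd p)) (\<lambda>i. gf i (fst p) (xi k i (snd p))) (n2 k (snd p))) \<in> borel_measurable ?N"
        by (rule gprime_meas) measurable
      then show ?thesis unfolding phi_def by measurable
    qed
    have "AE \<omega> in M. real_cond_exp M (hist M theta S xi k) (\<lambda>\<omega>. phi (theta k \<omega>) \<omega>) \<omega> = (\<integral>\<omega>'. phi (theta k \<omega>) \<omega>' \<partial>M)"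
      by (rule freeze_real[OF P Hsub histG Gsub Ksub indGK ZG ZH phim]) (use EF in blast)
    then show ?thesis
      using EF by (simp add: phi_def)
  qed
qed

end
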